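(* Let $\alpha\colon\mathcal H'\to\mathcal H$ be a morphism of graded connected Hopf algebras over a field $\Bbbk$. Let $\varphi,\psi$ be characters of $\mathcal H$ and put $\varphi'=\varphi\circ\alpha$, $\psi'=\psi\circ\alpha$. Then: (a) $\alpha\bigl(S(\varphi',\psi')\bigr)\subseteq S(\varphi,\psi)$; (b) $I(\varphi',\psi')$ is the ideal of $(\mathcal H')^*$ generated by $\alpha^*\bigl(I(\varphi,\psi)\bigr)$. Moreover, if $\alpha$ is injective then $S(\varphi',\psi')=\alpha^{-1}\bigl(S(\varphi,\psi)\bigr)$ and $I(\varphi',\psi')=\alpha^*\bigl(I(\varphi,\psi)\bigr)$.
   Context: Graded connected Hopf algebras have finite-dimensional homogeneous components; $\mathcal H^*=\bigoplus_n(\mathcal H_n)^*$ is the graded dual and $\alpha^*\colon\mathcal H^*\to(\mathcal H')^*$ the dual map. Characters are algebra morphisms to $\Bbbk$; for a linear functional $\varphi$, $\varphi_n=\varphi|_{\mathcal H_n}$. $S(\varphi,\psi)$ is the largest graded subcoalgebra of $\mathcal H$ on which $\varphi=\psi$; $I(\varphi,\psi)$ is the ideal of $\mathcal H^*$ generated by $\varphi_n-\psi_n$, $n\ge0$ (similarly for $\mathcal H'$). *)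

theory Defs
  imports Complex_Main
begin

text \<open>An element of H \<otimes> H is represented by a finite list of pairs (a,b), standing
  for the sum of the a \<otimes> b; similarly for triples and H \<otimes> H \<otimes> H.\<close>

record ('k, 'h) ghopf =
  scl  :: "'k \<Rightarrow> 'h \<Rightarrow> 'h"
  mul  :: "'h \<Rightarrow> 'h \<Rightarrow> 'h"
  one  :: "'h"
  cop  :: "'h \<Rightarrow> ('h \<times> 'h) list"
  cou  :: "'h \<Rightarrow> 'k"
  grd  :: "nat \<Rightarrow> 'h set"

definition lin_fun :: "('k::field, 'h::ab_group_add) ghopf \<Rightarrow> ('h \<Rightarrow> 'k) \<Rightarrow> bool" where
  "lin_fun H f \<longleftrightarrow> Vector_Spaces.linear (scl H) ((*)) f"

text \<open>Equality of elements of H \<otimes> H (resp. H \<otimes> H \<otimes> H) given by representatives: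
  over a field, elementary tensors of linear functionals separate points.\<close>
definition tens2_eq :: "('k::field, 'h::ab_group_add) ghopf \<Rightarrow> ('h \<times> 'h) list \<Rightarrow> ('h \<times> 'h) list \<Rightarrow> bool" where
  "tens2_eq H ts us \<longleftrightarrow> (\<forall>f g. lin_fun H f \<longrightarrow> lin_fun H g \<longrightarrow>
      (\<Sum>(a,b)\<leftarrow>ts. f a * g b) = (\<Sum>(a,b)\<leftarrow>us. f a * g b))"

definition tens3_eq :: "('k::field, 'h::ab_group_add) ghopf \<Rightarrow> ('h \<times> 'h \<times> 'h) list \<Rightarrow> ('h \<times> 'h \<times> 'h) list \<Rightarrow> bool" where
  "tens3_eq H ts us \<longleftrightarrow> (\<forall>f g h. lin_fun H f \<longrightarrow> lin_fun H g \<longrightarrow> lin_fun H h \<longrightarrow>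
      (\<Sum>(a,b,c)\<leftarrow>ts. f a * g b * h c) = (\<Sum>(a,b,c)\<leftarrow>us. f a * g b * h c))"

definition is_decomp :: "('k, 'h::ab_group_add) ghopf \<Rightarrow> 'h \<Rightarrow> (nat \<Rightarrow> 'h) \<Rightarrow> bool" where
  "is_decomp H x c \<longleftrightarrow> (\<forall>m. c m \<in> grd H m) \<and> finite {m. c m \<noteq> 0} \<and> x = (\<Sum>m\<in>{m. c m \<noteq> 0}. c m)"

definition proj :: "('k, 'h::ab_group_add) ghopf \<Rightarrow> nat \<Rightarrow> 'h \<Rightarrow> 'h" where
  "proj H n x = (THE c. is_decomp H x c) n"

definition graded_connected_hopf :: "('k::field, 'h::ab_group_add) ghopf \<Rightarrow> bool" where
  "graded_connected_hopf H \<longleftrightarrow>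
     \<comment> \<open>vector space, graded with finite-dimensional components\<close>
     vector_space (scl H) \<and>
     (\<forall>n. module.subspace (scl H) (grd H n)) \<and>
     (\<forall>n. \<exists>B. finite B \<and> B \<subseteq> grd H n \<and> grd H n \<subseteq> module.span (scl H) B) \<and>
     (\<forall>x. \<exists>!c. is_decomp H x c) \<and>
     \<comment> \<open>graded associative unital algebra\<close>
     (\<forall>x. Vector_Spaces.linear (scl H) (scl H) (mul H x)) \<and>
     (\<forall>y. Vector_Spaces.linear (scl H) (scl H) (\<lambda>x. mul H x y)) \<and>
     (\<forall>x y z. mul H (mul H x y) z = mul H x (mul H y z)) \<and>
     (\<forall>x. mul H (one H) x = x \<and> mul H x (one H) = x) \<and>
     one H \<in> grd H 0 \<and>
     (\<forall>i j x y. x \<in> grd H i \<longrightarrow> y \<in> grd H j \<longrightarrow> mul H x y \<in> grd H (i + j)) \<and>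
     \<comment> \<open>connected\<close>
     grd H 0 = module.span (scl H) {one H} \<and>
     \<comment> \<open>coassociative counital graded coalgebra\<close>
     (\<forall>c x y. tens2_eq H (cop H (scl H c x + y)) (map (\<lambda>(a,b). (scl H c a, b)) (cop H x) @ cop H y)) \<and>
     lin_fun H (cou H) \<and>
     (\<forall>x. tens3_eq H [(a1, a2, b). (a, b) \<leftarrow> cop H x, (a1, a2) \<leftarrow> cop H a]
                      [(a, b1, b2). (a, b) \<leftarrow> cop H x, (b1, b2) \<leftarrow> cop H b]) \<and>
     (\<forall>x. (\<Sum>(a,b)\<leftarrow>cop H x. scl H (cou H a) b) = x \<and> (\<Sum>(a,b)\<leftarrow>cop H x. scl H (cou H b) a) = x) \<and>
     (\<forall>n x. x \<in> grd H n \<longrightarrow> (\<exists>ts. tens2_eq H (cop H x) ts \<and>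
            (\<forall>(a,b)\<in>set ts. \<exists>i j. i + j = n \<and> a \<in> grd H i \<and> b \<in> grd H j))) \<and>
     (\<forall>n x. 0 < n \<longrightarrow> x \<in> grd H n \<longrightarrow> cou H x = 0) \<and>
     \<comment> \<open>bialgebra compatibility\<close>
     (\<forall>x y. tens2_eq H (cop H (mul H x y))
                 [(mul H a a', mul H b b'). (a, b) \<leftarrow> cop H x, (a', b') \<leftarrow> cop H y]) \<and>
     tens2_eq H (cop H (one H)) [(one H, one H)] \<and>
     (\<forall>x y. cou H (mul H x y) = cou H x * cou H y) \<and>
     cou H (one H) = 1 \<and>
     \<comment> \<open>antipode\<close>
     (\<exists>S. Vector_Spaces.linear (scl H) (scl H) S \<and>
          (\<forall>x. (\<Sum>(a,b)\<leftarrow>cop H x. mul H (S a) b) = scl H (cou H x) (one H) \<and>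
               (\<Sum>(a,b)\<leftarrow>cop H x. mul H a (S b)) = scl H (cou H x) (one H)))"

definition hopf_morphism :: "('k::field, 'a::ab_group_add) ghopf \<Rightarrow> ('k, 'b::ab_group_add) ghopf \<Rightarrow> ('a \<Rightarrow> 'b) \<Rightarrow> bool" where
  "hopf_morphism H' H \<alpha> \<longleftrightarrow>
     Vector_Spaces.linear (scl H') (scl H) \<alpha> \<and>
     (\<forall>n x. x \<in> grd H' n \<longrightarrow> \<alpha> x \<in> grd H n) \<and>
     (\<forall>x y. \<alpha> (mul H' x y) = mul H (\<alpha> x) (\<alpha> y)) \<and>
     \<alpha> (one H') = one H \<and>
     (\<forall>x. tens2_eq H (map (\<lambda>(a,b). (\<alpha> a, \<alpha> b)) (cop H' x)) (cop H (\<alpha> x))) \<and>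
     (\<forall>x. cou H (\<alpha> x) = cou H' x)"

definition character :: "('k::field, 'h::ab_group_add) ghopf \<Rightarrow> ('h \<Rightarrow> 'k) \<Rightarrow> bool" where
  "character H \<phi> \<longleftrightarrow> lin_fun H \<phi> \<and> (\<forall>x y. \<phi> (mul H x y) = \<phi> x * \<phi> y) \<and> \<phi> (one H) = 1"

definition graded_subcoalgebra :: "('k::field, 'h::ab_group_add) ghopf \<Rightarrow> 'h set \<Rightarrow> bool" where
  "graded_subcoalgebra H C \<longleftrightarrow>
     module.subspace (scl H) C \<and>
     (\<forall>x\<in>C. \<forall>n. proj H n x \<in> C) \<and>
     (\<forall>x\<in>C. \<exists>ts. tens2_eq H (cop H x) ts \<and> set ts \<subseteq> C \<times> C)"

definition S_coalg :: "('k::field, 'h::ab_group_add) ghopf \<Rightarrow> ('h \<Rightarrow> 'k) \<Rightarrow> ('h \<Rightarrow> 'k) \<Rightarrow> 'h set" where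
  "S_coalg H \<phi> \<psi> = (GREATEST C. graded_subcoalgebra H C \<and> (\<forall>x\<in>C. \<phi> x = \<psi> x))"

definition gdual :: "('k::field, 'h::ab_group_add) ghopf \<Rightarrow> ('h \<Rightarrow> 'k) set" where
  "gdual H = {f. lin_fun H f \<and> finite {n. \<exists>x\<in>grd H n. f x \<noteq> 0}}"

definition conv :: "('k::field, 'h::ab_group_add) ghopf \<Rightarrow> ('h \<Rightarrow> 'k) \<Rightarrow> ('h \<Rightarrow> 'k) \<Rightarrow> ('h \<Rightarrow> 'k)" where
  "conv H f g = (\<lambda>x. \<Sum>(a,b)\<leftarrow>cop H x. f a * g b)"

definition dual_ideal :: "('k::field, 'h::ab_group_add) ghopf \<Rightarrow> ('h \<Rightarrow> 'k) set \<Rightarrow> bool" where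
  "dual_ideal H J \<longleftrightarrow> J \<subseteq> gdual H \<and> (\<lambda>_. 0) \<in> J \<and>
     (\<forall>f\<in>J. \<forall>g\<in>J. (\<lambda>x. f x + g x) \<in> J) \<and>
     (\<forall>c. \<forall>f\<in>J. (\<lambda>x. c * f x) \<in> J) \<and>
     (\<forall>f\<in>J. \<forall>g\<in>gdual H. conv H f g \<in> J \<and> conv H g f \<in> J)"

definition gen_ideal :: "('k::field, 'h::ab_group_add) ghopf \<Rightarrow> ('h \<Rightarrow> 'k) set \<Rightarrow> ('h \<Rightarrow> 'k) set" where
  "gen_ideal H G = \<Inter>{J. dual_ideal H J \<and> G \<subseteq> J}"

definition comp_n :: "('k, 'h::ab_group_add) ghopf \<Rightarrow> ('h \<Rightarrow> 'k) \<Rightarrow> nat \<Rightarrow> ('h \<Rightarrow> 'k)" where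
  "comp_n H \<phi> n = (\<lambda>x. \<phi> (proj H n x))"

definition I_ideal :: "('k::field, 'h::ab_group_add) ghopf \<Rightarrow> ('h \<Rightarrow> 'k) \<Rightarrow> ('h \<Rightarrow> 'k) \<Rightarrow> ('h \<Rightarrow> 'k) set" where
  "I_ideal H \<phi> \<psi> = gen_ideal H {(\<lambda>x. comp_n H \<phi> n x - comp_n H \<psi> n x) | n. True}"

definition dual_map :: "('a \<Rightarrow> 'b) \<Rightarrow> ('b \<Rightarrow> 'k) \<Rightarrow> ('a \<Rightarrow> 'k)" where
  "dual_map \<alpha> f = f \<circ> \<alpha>"

end

theory Submission
  imports Defs
begin

lemma vs_field: "vector_space ((*) :: 'k::field \<Rightarrow> 'k \<Rightarrow> 'k)"
  by unfold_locales (auto simp: algebra_simps)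

lemma proj_onto_exists:
  assumes "vector_space s" "module.subspace s U"
  shows "\<exists>p. Vector_Spaces.linear s s p \<and> range p \<subseteq> U \<and> (\<forall>u\<in>U. p u = u)"
proof -
  interpret vector_space s by fact
  interpret vector_space_pair s s by unfold_locales
  have "Vector_Spaces.linear s s id" by (simp add: linear_id)
  from linear_exists_left_inverse_on[OF this assms(2)] show ?thesis by auto
qed

definition T2 :: "('h \<Rightarrow> 'k::field) \<Rightarrow> ('h \<Rightarrow> 'k) \<Rightarrow> ('h \<times> 'h) list \<Rightarrow> 'k" where
  "T2 f g ts = (\<Sum>(a,b)\<leftarrow>ts. f a * g b)"

lemma T2_append[simp]: "T2 f g (xs @ ys) = T2 f g xs + T2 f g ys"
  by (simp add: T2_def)
lemma T2_Nil[simp]: "T2 f g [] = 0"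
  by (simp add: T2_def)
lemma T2_Cons[simp]: "T2 f g ((a,b) # ts) = f a * g b + T2 f g ts"
  by (simp add: T2_def)
lemma T2_map: "T2 f g (map (\<lambda>(a,b). (u a, v b)) ts) = T2 (f \<circ> u) (g \<circ> v) ts"
  by (induction ts) (auto simp: T2_def)
lemma T2_zero: "(\<And>a b. (a,b) \<in> set ts \<Longrightarrow> f a = 0 \<or> g b = 0) \<Longrightarrow> T2 f g ts = 0"
proof (induction ts)
  case (Cons p ts)
  obtain a b where p: "p = (a,b)" by (cases p)
  have "f a * g b = 0" using Cons.prems[of a b] p by auto
  moreover have "T2 f g ts = 0" using Cons by auto
  ultimately show ?case using p by simp
qed simp
lemma T2_cong: "(\<And>a b. (a,b) \<in> set ts \<Longrightarrow> f a * g b = f' a * g' b) \<Longrightarrow> T2 f g ts = T2 f' g' ts"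
  by (induction ts) auto

lemma tens2_eq_T2: "tens2_eq H ts us \<longleftrightarrow> (\<forall>f g. lin_fun H f \<longrightarrow> lin_fun H g \<longrightarrow> T2 f g ts = T2 f g us)"
  by (simp add: tens2_eq_def T2_def)

lemma conv_T2: "conv H f g x = T2 f g (cop H x)"
  by (simp add: conv_def T2_def)

locale gch =
  fixes H :: "('k::field, 'h::ab_group_add) ghopf"
  assumes G: "graded_connected_hopf H"
begin

lemma vs: "vector_space (scl H)" using G[unfolded graded_connected_hopf_def] by (elim conjE) assumption

sublocale vs: vector_space "scl H" by (rule vs)

lemma grd_sub0: "\<forall>n. vs.subspace (grd H n)"
  using G[unfolded graded_connected_hopf_def] by (elim conjE) assumption
lemmas grd_sub = grd_sub0[rule_format]
lemma decomp_ex10: "\<forall>x. \<exists>!c. is_decomp H x c"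
  using G[unfolded graded_connected_hopf_def] by (elim conjE) assumption
lemmas decomp_ex1 = decomp_ex10[rule_format]
lemma cop_lin0: "\<forall>c x y. tens2_eq H (cop H (scl H c x + y)) (map (\<lambda>(a,b). (scl H c a, b)) (cop H x) @ cop H y)"
  using G[unfolded graded_connected_hopf_def] by (elim conjE) assumption
lemmas cop_lin = cop_lin0[rule_format]
lemma cop_grd0: "\<forall>n x. x \<in> grd H n \<longrightarrow> (\<exists>ts. tens2_eq H (cop H x) ts \<and>
            (\<forall>(a,b)\<in>set ts. \<exists>i j. i + j = n \<and> a \<in> grd H i \<and> b \<in> grd H j))"
  using G[unfolded graded_connected_hopf_def] by (elim conjE) assumption
lemmas cop_grd = cop_grd0[rule_format]

lemma lin_fun_iff: "lin_fun H f \<longleftrightarrow> (\<forall>x y. f (x + y) = f x + f y) \<and> (\<forall>c x. f (scl H c x) = c * f x)"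
  by (simp only: lin_fun_def Vector_Spaces.linear_iff vs vs_field simp_thms)

lemma lin_funD:
  assumes "lin_fun H f"
  shows "f (x + y) = f x + f y" "f (scl H c x) = c * f x" "f 0 = 0" "f (x - y) = f x - f y"
    "f (- x) = - f x" "f (sum u A) = (\<Sum>a\<in>A. f (u a))"
proof -
  interpret l: Vector_Spaces.linear "scl H" "(*)" f using assms unfolding lin_fun_def .
  show "f (x + y) = f x + f y" "f (scl H c x) = c * f x" "f 0 = 0" "f (x - y) = f x - f y"
    "f (- x) = - f x" "f (sum u A) = (\<Sum>a\<in>A. f (u a))"
    by (simp_all add: l.add l.scale l.zero l.diff l.neg l.sum)
qed

lemma lin_funI:
  assumes "\<And>x y. f (x + y) = f x + f y" "\<And>c x. f (scl H c x) = c * f x"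
  shows "lin_fun H f"
  using assms lin_fun_iff by blast

lemma lin_fun_diff: assumes "lin_fun H f" "lin_fun H g" shows "lin_fun H (\<lambda>x. f x - g x)"
  by (rule lin_funI) (simp_all add: lin_funD(1,2)[OF assms(1)] lin_funD(1,2)[OF assms(2)] algebra_simps)
lemma lin_fun_add: assumes "lin_fun H f" "lin_fun H g" shows "lin_fun H (\<lambda>x. f x + g x)"
  by (rule lin_funI) (simp_all add: lin_funD(1,2)[OF assms(1)] lin_funD(1,2)[OF assms(2)] algebra_simps)
lemma lin_fun_cmult: assumes "lin_fun H f" shows "lin_fun H (\<lambda>x. c * f x)"
  by (rule lin_funI) (simp_all add: lin_funD(1,2)[OF assms(1)] algebra_simps)
lemma lin_fun_zero: "lin_fun H (\<lambda>x. 0)"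
  by (rule lin_funI) auto
lemma lin_fun_comp: "Vector_Spaces.linear (scl H) (scl H) p \<Longrightarrow> lin_fun H f \<Longrightarrow> lin_fun H (f \<circ> p)"
  unfolding lin_fun_def by (rule Vector_Spaces.linear_compose)

lemma T2_scale: assumes "lin_fun H f" shows "T2 f g (map (\<lambda>(a,b). (scl H c a, b)) ts) = c * T2 f g ts"
  by (induction ts) (auto simp: lin_funD(2)[OF assms] algebra_simps)

lemma conv_lin:
  assumes f: "lin_fun H f" and g: "lin_fun H g"
  shows "lin_fun H (conv H f g)"
proof -
  have key: "conv H f g (scl H c x + y) = c * conv H f g x + conv H f g y" for c x y
    using cop_lin[of c x y] f g by (simp add: tens2_eq_T2 conv_T2 T2_scale)
  have "conv H f g 0 + conv H f g 0 = conv H f g 0 + 0"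
    using key[of 1 0 0] by simp
  then have z: "conv H f g 0 = 0" by (simp only: add_left_cancel)
  show ?thesis
  proof (rule lin_funI)
    fix x y show "conv H f g (x + y) = conv H f g x + conv H f g y"
      using key[of 1 x y] by simp
  next
    fix c x show "conv H f g (scl H c x) = c * conv H f g x"
      using key[of c x 0] z by simp
  qed
qed

lemma tens2_refl: "tens2_eq H ts ts" by (simp add: tens2_eq_def)
lemma tens2_sym: "tens2_eq H ts us \<Longrightarrow> tens2_eq H us ts" by (simp add: tens2_eq_def)
lemma tens2_trans: "tens2_eq H ts us \<Longrightarrow> tens2_eq H us vs \<Longrightarrow> tens2_eq H ts vs" by (simp add: tens2_eq_def)

definition copset :: "'h set \<Rightarrow> 'h set" where
  "copset C = {x. \<exists>ts. tens2_eq H (cop H x) ts \<and> set ts \<subseteq> C \<times> C}"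

lemma conv_zero: "lin_fun H f \<Longrightarrow> lin_fun H g \<Longrightarrow> conv H f g 0 = 0"
  using lin_funD(3)[OF conv_lin] by blast
lemma conv_add: "lin_fun H f \<Longrightarrow> lin_fun H g \<Longrightarrow> conv H f g (x + y) = conv H f g x + conv H f g y"
  using lin_funD(1)[OF conv_lin] by blast
lemma conv_scale: "lin_fun H f \<Longrightarrow> lin_fun H g \<Longrightarrow> conv H f g (scl H c x) = c * conv H f g x"
  using lin_funD(2)[OF conv_lin] by blast

lemma cop_closed_subspace:
  assumes C: "vs.subspace C"
  shows "vs.subspace (copset C)"
  unfolding vs.subspace_def
proof (intro conjI ballI allI)
  show "0 \<in> copset C"
    unfolding copset_def
    by (rule CollectI, rule exI[of _ "[]"]) (simp add: tens2_eq_T2 conv_T2[symmetric] conv_zero)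
next
  fix x y assume "x \<in> copset C" "y \<in> copset C"
  then obtain tx ty where tx: "tens2_eq H (cop H x) tx" "set tx \<subseteq> C \<times> C"
    and ty: "tens2_eq H (cop H y) ty" "set ty \<subseteq> C \<times> C" unfolding copset_def by blast
  have "tens2_eq H (cop H (x + y)) (tx @ ty)"
    using tx(1) ty(1) unfolding tens2_eq_T2 by (simp add: conv_T2[symmetric] conv_add)
  then show "x + y \<in> copset C" unfolding copset_def using tx(2) ty(2) by (auto intro!: exI[of _ "tx @ ty"])
next
  fix k x assume "x \<in> copset C"
  then obtain tx where tx: "tens2_eq H (cop H x) tx" "set tx \<subseteq> C \<times> C" unfolding copset_def by blast
  have s: "set (map (\<lambda>(a,b). (scl H k a, b)) tx) \<subseteq> C \<times> C"
    using tx(2) C by (auto simp: vs.subspace_def)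
  have "tens2_eq H (cop H (scl H k x)) (map (\<lambda>(a,b). (scl H k a, b)) tx)"
    using tx(1) unfolding tens2_eq_T2 by (simp add: conv_T2[symmetric] conv_scale T2_scale)
  then show "scl H k x \<in> copset C" unfolding copset_def using s by blast
qed

end

context gch
begin

lemma decomp_proj: "is_decomp H x (\<lambda>m. proj H m x)"
proof -
  have "is_decomp H x (THE c. is_decomp H x c)" by (rule theI'[OF decomp_ex1])
  then show ?thesis unfolding proj_def by simp
qed

lemma proj_eq: "is_decomp H x c \<Longrightarrow> proj H n x = c n"
  unfolding proj_def using the1_equality[OF decomp_ex1] by metis

lemma decompI:
  assumes "\<And>m. c m \<in> grd H m" "finite F" "\<And>m. m \<notin> F \<Longrightarrow> c m = 0" "x = sum c F"
  shows "is_decomp H x c"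
proof -
  have sub: "{m. c m \<noteq> 0} \<subseteq> F" using assms(3) by blast
  then have fin: "finite {m. c m \<noteq> 0}" using assms(2) finite_subset by blast
  have "sum c F = sum c {m. c m \<noteq> 0}"
    by (rule sum.mono_neutral_right[OF assms(2) sub]) auto
  then show ?thesis using assms fin unfolding is_decomp_def by auto
qed

lemma decomp_sum:
  assumes "is_decomp H x c" "finite F" "{m. c m \<noteq> 0} \<subseteq> F"
  shows "x = sum c F"
proof -
  have "sum c F = sum c {m. c m \<noteq> 0}"
    by (rule sum.mono_neutral_right[OF assms(2) assms(3)]) auto
  then show ?thesis using assms(1) unfolding is_decomp_def by auto
qed

lemma proj_grd: "proj H n x \<in> grd H n"
  using decomp_proj[of x] unfolding is_decomp_def by auto

lemma proj_fin: "finite {m. proj H m x \<noteq> 0}"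
  using decomp_proj[of x] unfolding is_decomp_def by auto

lemma proj_sum: "finite F \<Longrightarrow> {m. proj H m x \<noteq> 0} \<subseteq> F \<Longrightarrow> x = (\<Sum>m\<in>F. proj H m x)"
  using decomp_sum[OF decomp_proj] by blast

lemma zero_grd: "0 \<in> grd H n"
  using grd_sub[of n] vs.subspace_0 by blast

lemma proj_hom: "x \<in> grd H m \<Longrightarrow> proj H n x = (if n = m then x else 0)"
  by (rule proj_eq, rule decompI[where F="{m}"]) (auto simp: zero_grd)

lemma proj_add: "proj H n (x + y) = proj H n x + proj H n y"
proof (rule proj_eq, rule decompI[where F="{m. proj H m x \<noteq> 0} \<union> {m. proj H m y \<noteq> 0}"])
  show "proj H m x + proj H m y \<in> grd H m" for m
    using grd_sub[of m] proj_grd by (simp add: vs.subspace_add)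
  show "finite ({m. proj H m x \<noteq> 0} \<union> {m. proj H m y \<noteq> 0})" using proj_fin by simp
  show "m \<notin> {m. proj H m x \<noteq> 0} \<union> {m. proj H m y \<noteq> 0} \<Longrightarrow> proj H m x + proj H m y = 0" for m
    by simp
  show "x + y = (\<Sum>m\<in>{m. proj H m x \<noteq> 0} \<union> {m. proj H m y \<noteq> 0}. proj H m x + proj H m y)"
    unfolding sum.distrib
    using proj_sum[of "{m. proj H m x \<noteq> 0} \<union> {m. proj H m y \<noteq> 0}" x]
      proj_sum[of "{m. proj H m x \<noteq> 0} \<union> {m. proj H m y \<noteq> 0}" y] proj_fin by auto
qed

lemma proj_scale: "proj H n (scl H c x) = scl H c (proj H n x)"
proof (rule proj_eq, rule decompI[where F="{m. proj H m x \<noteq> 0}"])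
  show "scl H c (proj H m x) \<in> grd H m" for m
    using grd_sub[of m] proj_grd by (simp add: vs.subspace_scale)
  show "finite {m. proj H m x \<noteq> 0}" using proj_fin by simp
  show "m \<notin> {m. proj H m x \<noteq> 0} \<Longrightarrow> scl H c (proj H m x) = 0" for m
    by simp
  show "scl H c x = (\<Sum>m\<in>{m. proj H m x \<noteq> 0}. scl H c (proj H m x))"
    using proj_sum[of "{m. proj H m x \<noteq> 0}" x] proj_fin by (metis order_refl vs.scale_sum_right)
qed

lemma proj_linear: "Vector_Spaces.linear (scl H) (scl H) (proj H n)"
  unfolding Vector_Spaces.linear_iff using vs proj_add proj_scale by blast

lemma proj_zero: "proj H n 0 = 0"
  using proj_hom[OF zero_grd[of 0]] by simp

lemma lin_fun_proj_sum:
  assumes "lin_fun H f" "finite F" "{m. proj H m x \<noteq> 0} \<subseteq> F"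
  shows "f x = (\<Sum>m\<in>F. f (proj H m x))"
  using proj_sum[OF assms(2,3)] lin_funD(6)[OF assms(1)] by metis

lemma lin_fun_comp_n: "lin_fun H f \<Longrightarrow> lin_fun H (comp_n H f n)"
  using lin_fun_comp[OF proj_linear] unfolding comp_n_def o_def by blast

lemma gen_in_gdual:
  assumes "lin_fun H \<phi>" "lin_fun H \<psi>"
  shows "(\<lambda>x. comp_n H \<phi> n x - comp_n H \<psi> n x) \<in> gdual H"
proof -
  have "{m. \<exists>x\<in>grd H m. comp_n H \<phi> n x - comp_n H \<psi> n x \<noteq> 0} \<subseteq> {n}"
    using assms by (auto simp: comp_n_def proj_hom lin_funD)
  then show ?thesis unfolding gdual_def
    using lin_fun_diff[OF lin_fun_comp_n[OF assms(1)] lin_fun_comp_n[OF assms(2)]]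
    by (auto intro: finite_subset)
qed

lemma conv_gdual:
  assumes f: "f \<in> gdual H" and g: "g \<in> gdual H"
  shows "conv H f g \<in> gdual H"
proof -
  let ?Sf = "{n. \<exists>x\<in>grd H n. f x \<noteq> 0}" and ?Sg = "{n. \<exists>x\<in>grd H n. g x \<noteq> 0}"
  have lf: "lin_fun H f" and lg: "lin_fun H g" and ff: "finite ?Sf" and fg: "finite ?Sg"
    using f g by (auto simp: gdual_def)
  have "{n. \<exists>x\<in>grd H n. conv H f g x \<noteq> 0} \<subseteq> (\<lambda>(i,j). i + j) ` (?Sf \<times> ?Sg)"
  proof
    fix n assume "n \<in> {n. \<exists>x\<in>grd H n. conv H f g x \<noteq> 0}"
    then obtain x where x: "x \<in> grd H n" "conv H f g x \<noteq> 0" by blast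
    obtain ts where ts: "tens2_eq H (cop H x) ts"
      "\<forall>(a,b)\<in>set ts. \<exists>i j. i + j = n \<and> a \<in> grd H i \<and> b \<in> grd H j"
      using cop_grd[OF x(1)] by blast
    have c: "conv H f g x = T2 f g ts" using ts(1) lf lg by (simp add: conv_T2 tens2_eq_T2)
    show "n \<in> (\<lambda>(i,j). i + j) ` (?Sf \<times> ?Sg)"
    proof (rule ccontr)
      assume nn: "n \<notin> (\<lambda>(i,j). i + j) ` (?Sf \<times> ?Sg)"
      have "T2 f g ts = 0"
      proof (rule T2_zero)
        fix a b assume "(a,b) \<in> set ts"
        then obtain i j where "i + j = n" "a \<in> grd H i" "b \<in> grd H j" using ts(2) by blast
        then show "f a = 0 \<or> g b = 0" using nn by force
      qed
      then show False using c x(2) by simp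
    qed
  qed
  then have "finite {n. \<exists>x\<in>grd H n. conv H f g x \<noteq> 0}"
    using ff fg by (meson finite_SigmaI finite_imageI finite_subset)
  then show ?thesis using conv_lin[OF lf lg] by (simp add: gdual_def)
qed

lemma gdual_ideal: "dual_ideal H (gdual H)"
proof -
  have add: "(\<lambda>x. f x + g x) \<in> gdual H" if "f \<in> gdual H" "g \<in> gdual H" for f g
  proof -
    have "{n. \<exists>x\<in>grd H n. f x + g x \<noteq> 0} \<subseteq> {n. \<exists>x\<in>grd H n. f x \<noteq> 0} \<union> {n. \<exists>x\<in>grd H n. g x \<noteq> 0}"
      by force
    then show ?thesis using that lin_fun_add by (auto simp: gdual_def intro: finite_subset)
  qed
  have sc: "(\<lambda>x. c * f x) \<in> gdual H" if "f \<in> gdual H" for f c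
  proof -
    have "{n. \<exists>x\<in>grd H n. c * f x \<noteq> 0} \<subseteq> {n. \<exists>x\<in>grd H n. f x \<noteq> 0}"
      by force
    then show ?thesis using that lin_fun_cmult by (auto simp: gdual_def intro: finite_subset)
  qed
  show ?thesis unfolding dual_ideal_def
    using add sc conv_gdual lin_fun_zero by (auto simp: gdual_def)
qed

lemma gen_sub: "G \<subseteq> gen_ideal H G"
  unfolding gen_ideal_def by blast

lemma gen_least: "dual_ideal H J \<Longrightarrow> G \<subseteq> J \<Longrightarrow> gen_ideal H G \<subseteq> J"
  unfolding gen_ideal_def by blast

lemma gen_mono: "G \<subseteq> G' \<Longrightarrow> gen_ideal H G \<subseteq> gen_ideal H G'"
  unfolding gen_ideal_def by blast

lemma gen_is_ideal:
  assumes "G \<subseteq> gdual H"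
  shows "dual_ideal H (gen_ideal H G)"
proof -
  let ?F = "{J. dual_ideal H J \<and> G \<subseteq> J}"
  have ne: "gdual H \<in> ?F" using assms gdual_ideal by blast
  have "dual_ideal H (\<Inter>?F)" unfolding dual_ideal_def[of H "\<Inter>?F"]
  proof (intro conjI ballI allI)
    show "\<Inter>?F \<subseteq> gdual H" using ne by blast
    show "(\<lambda>_. 0) \<in> \<Inter>?F" by (auto simp: dual_ideal_def)
    show "(\<lambda>x. f x + g x) \<in> \<Inter>?F" if "f \<in> \<Inter>?F" "g \<in> \<Inter>?F" for f g
      using that by (auto simp: dual_ideal_def)
    show "(\<lambda>x. c * f x) \<in> \<Inter>?F" if "f \<in> \<Inter>?F" for f c
      using that by (auto simp: dual_ideal_def)
    show "conv H f g \<in> \<Inter>?F" if "f \<in> \<Inter>?F" "g \<in> gdual H" for f g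
      using that by (auto simp: dual_ideal_def)
    show "conv H g f \<in> \<Inter>?F" if "f \<in> \<Inter>?F" "g \<in> gdual H" for f g
      using that by (auto simp: dual_ideal_def)
  qed
  then show ?thesis unfolding gen_ideal_def .
qed

lemma I_ideal_is:
  assumes "lin_fun H \<phi>" "lin_fun H \<psi>"
  shows "dual_ideal H (I_ideal H \<phi> \<psi>)"
  unfolding I_ideal_def by (rule gen_is_ideal) (use gen_in_gdual[OF assms] in blast)

end

context gch
begin

lemma graded_subcoalgebraI:
  assumes "vs.subspace C" "\<And>x n. x \<in> C \<Longrightarrow> proj H n x \<in> C" "C \<subseteq> copset C"
  shows "graded_subcoalgebra H C"
  using assms unfolding graded_subcoalgebra_def copset_def by blast

lemma graded_subcoalgebraD:
  assumes "graded_subcoalgebra H C"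
  shows "vs.subspace C" "\<And>x n. x \<in> C \<Longrightarrow> proj H n x \<in> C" "C \<subseteq> copset C"
  using assms unfolding graded_subcoalgebra_def copset_def by blast+

lemma S_coalg_char:
  assumes lp: "lin_fun H \<phi>" and lq: "lin_fun H \<psi>"
  shows "graded_subcoalgebra H (S_coalg H \<phi> \<psi>) \<and> (\<forall>x\<in>S_coalg H \<phi> \<psi>. \<phi> x = \<psi> x)"
    and "\<And>C. graded_subcoalgebra H C \<Longrightarrow> (\<forall>x\<in>C. \<phi> x = \<psi> x) \<Longrightarrow> C \<subseteq> S_coalg H \<phi> \<psi>"
proof -
  define P where "P C \<longleftrightarrow> graded_subcoalgebra H C \<and> (\<forall>x\<in>C. \<phi> x = \<psi> x)" for C
  define U where "U = \<Union>{C. P C}"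
  define B where "B = vs.span U"
  have UB: "U \<subseteq> B" unfolding B_def by (rule vs.span_superset)
  have sB: "vs.subspace B" unfolding B_def by (rule vs.subspace_span)
  have "vs.subspace {x. \<forall>n. proj H n x \<in> B}"
    unfolding vs.subspace_def
    using sB proj_zero proj_add proj_scale
    by (simp add: vs.subspace_0 vs.subspace_add vs.subspace_scale)
  moreover have "U \<subseteq> {x. \<forall>n. proj H n x \<in> B}"
  proof
    fix x assume "x \<in> U"
    then obtain C where "P C" "x \<in> C" unfolding U_def by blast
    then have "proj H n x \<in> C" for n unfolding P_def using graded_subcoalgebraD(2) by blast
    then show "x \<in> {x. \<forall>n. proj H n x \<in> B}" using \<open>P C\<close> UB unfolding U_def by blast
  qed
  ultimately have pB: "B \<subseteq> {x. \<forall>n. proj H n x \<in> B}"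
    unfolding B_def by (rule vs.span_minimal[rotated])
  have "U \<subseteq> copset B"
  proof
    fix x assume "x \<in> U"
    then obtain C where PC: "P C" and xC: "x \<in> C" unfolding U_def by blast
    then have "x \<in> copset C" unfolding P_def using graded_subcoalgebraD(3) by blast
    moreover have "C \<subseteq> B" using PC UB unfolding U_def by blast
    ultimately show "x \<in> copset B" unfolding copset_def by blast
  qed
  then have cB: "B \<subseteq> copset B"
    using vs.span_minimal cop_closed_subspace[OF sB] unfolding B_def by blast
  have "vs.subspace {x. \<phi> x = \<psi> x}"
    unfolding vs.subspace_def using lin_funD(1,2,3)[OF lp] lin_funD(1,2,3)[OF lq] by simp
  moreover have "U \<subseteq> {x. \<phi> x = \<psi> x}" unfolding U_def P_def by blast
  ultimately have eB: "B \<subseteq> {x. \<phi> x = \<psi> x}"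
    unfolding B_def by (rule vs.span_minimal[rotated])
  have PB: "P B" unfolding P_def
    using graded_subcoalgebraI[OF sB _ cB] pB eB by blast
  have "S_coalg H \<phi> \<psi> = B"
    unfolding S_coalg_def P_def[symmetric]
  proof (rule Greatest_equality)
    show "P B" by (rule PB)
    show "y \<le> B" if "P y" for y using that UB unfolding U_def by blast
  qed
  then show "graded_subcoalgebra H (S_coalg H \<phi> \<psi>) \<and> (\<forall>x\<in>S_coalg H \<phi> \<psi>. \<phi> x = \<psi> x)"
    using PB unfolding P_def by simp
  show "C \<subseteq> S_coalg H \<phi> \<psi>" if "graded_subcoalgebra H C" "\<forall>x\<in>C. \<phi> x = \<psi> x" for C
    using that UB \<open>S_coalg H \<phi> \<psi> = B\<close> unfolding U_def P_def by blast
qed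

end

lemma T2_diff: "T2 f g ts - T2 f' g' ts = T2 (\<lambda>a. f a - f' a) g ts + T2 f' (\<lambda>b. g b - g' b) ts"
  by (induction ts) (auto simp: algebra_simps)

locale morph = H': gch H' + H: gch H
  for H' :: "('k::field, 'a::ab_group_add) ghopf" and H :: "('k, 'b::ab_group_add) ghopf" +
  fixes \<alpha> :: "'a \<Rightarrow> 'b"
  assumes M: "hopf_morphism H' H \<alpha>"
begin

lemma alin: "Vector_Spaces.linear (scl H') (scl H) \<alpha>"
  using M[unfolded hopf_morphism_def] by (elim conjE) assumption
lemma agrd0: "\<forall>n x. x \<in> grd H' n \<longrightarrow> \<alpha> x \<in> grd H n"
  using M[unfolded hopf_morphism_def] by (elim conjE) assumption
lemmas agrd = agrd0[rule_format]
lemma acop0: "\<forall>x. tens2_eq H (map (\<lambda>(a,b). (\<alpha> a, \<alpha> b)) (cop H' x)) (cop H (\<alpha> x))"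
  using M[unfolded hopf_morphism_def] by (elim conjE) assumption
lemmas acop = acop0[rule_format]

sublocale la: Vector_Spaces.linear "scl H'" "scl H" \<alpha> by (rule alin)

lemma lin_pull: "lin_fun H f \<Longrightarrow> lin_fun H' (f \<circ> \<alpha>)"
  unfolding lin_fun_def by (rule Vector_Spaces.linear_compose[OF alin])

lemma lin_pull': "lin_fun H f \<Longrightarrow> lin_fun H' (\<lambda>x. f (\<alpha> x))"
  using lin_pull unfolding o_def .

lemma tens2_push: "tens2_eq H' ts us \<Longrightarrow>
   tens2_eq H (map (\<lambda>(a,b). (\<alpha> a, \<alpha> b)) ts) (map (\<lambda>(a,b). (\<alpha> a, \<alpha> b)) us)"
  unfolding tens2_eq_T2 T2_map using lin_pull by blast

lemma proj_alpha: "proj H n (\<alpha> x) = \<alpha> (proj H' n x)"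
proof (rule H.proj_eq, rule H.decompI[where F="{m. proj H' m x \<noteq> 0}"])
  show "\<alpha> (proj H' m x) \<in> grd H m" for m by (rule agrd[OF H'.proj_grd])
  show "finite {m. proj H' m x \<noteq> 0}" by (rule H'.proj_fin)
  show "m \<notin> {m. proj H' m x \<noteq> 0} \<Longrightarrow> \<alpha> (proj H' m x) = 0" for m by simp
  show "\<alpha> x = (\<Sum>m\<in>{m. proj H' m x \<noteq> 0}. \<alpha> (proj H' m x))"
    using H'.proj_sum[of "{m. proj H' m x \<noteq> 0}" x] H'.proj_fin la.sum by (metis order_refl)
qed

lemma T2_acop: "lin_fun H f \<Longrightarrow> lin_fun H g \<Longrightarrow> T2 f g (cop H (\<alpha> x)) = T2 (f \<circ> \<alpha>) (g \<circ> \<alpha>) (cop H' x)"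
  using acop[of x] unfolding tens2_eq_T2 T2_map by metis

lemma dual_conv:
  assumes "lin_fun H f" "lin_fun H g"
  shows "dual_map \<alpha> (conv H f g) = conv H' (dual_map \<alpha> f) (dual_map \<alpha> g)"
  unfolding dual_map_def by (rule ext) (simp add: conv_T2 T2_acop[OF assms])

lemma dual_gdual: "f \<in> gdual H \<Longrightarrow> dual_map \<alpha> f \<in> gdual H'"
proof -
  assume f: "f \<in> gdual H"
  have "{n. \<exists>x\<in>grd H' n. dual_map \<alpha> f x \<noteq> 0} \<subseteq> {n. \<exists>y\<in>grd H n. f y \<noteq> 0}"
    using agrd unfolding dual_map_def by fastforce
  then show ?thesis using f lin_pull unfolding gdual_def dual_map_def by (auto intro: finite_subset)
qed

lemma dual_gen: "dual_map \<alpha> (\<lambda>x. comp_n H \<phi> n x - comp_n H \<psi> n x)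
    = (\<lambda>x. comp_n H' (\<phi> \<circ> \<alpha>) n x - comp_n H' (\<psi> \<circ> \<alpha>) n x)"
  unfolding dual_map_def comp_n_def by (rule ext) (simp add: proj_alpha)

lemma dual_gens: "dual_map \<alpha> ` {(\<lambda>x. comp_n H \<phi> n x - comp_n H \<psi> n x) | n. True}
    = {(\<lambda>x. comp_n H' (\<phi> \<circ> \<alpha>) n x - comp_n H' (\<psi> \<circ> \<alpha>) n x) | n. True}"
proof -
  have e1: "{(\<lambda>x. comp_n H \<phi> n x - comp_n H \<psi> n x) | n. True} = range (\<lambda>n x. comp_n H \<phi> n x - comp_n H \<psi> n x)" by auto
  have e2: "{(\<lambda>x. comp_n H' (\<phi> \<circ> \<alpha>) n x - comp_n H' (\<psi> \<circ> \<alpha>) n x) | n. True} = range (\<lambda>n x. comp_n H' (\<phi> \<circ> \<alpha>) n x - comp_n H' (\<psi> \<circ> \<alpha>) n x)" by auto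
  show ?thesis unfolding e1 e2 image_image dual_gen ..
qed

end

context morph
begin

lemma part_a:
  assumes lp: "lin_fun H \<phi>" and lq: "lin_fun H \<psi>"
  shows "\<alpha> ` S_coalg H' (\<phi> \<circ> \<alpha>) (\<psi> \<circ> \<alpha>) \<subseteq> S_coalg H \<phi> \<psi>"
proof -
  let ?S' = "S_coalg H' (\<phi> \<circ> \<alpha>) (\<psi> \<circ> \<alpha>)"
  have c': "graded_subcoalgebra H' ?S'" "\<forall>x\<in>?S'. (\<phi> \<circ> \<alpha>) x = (\<psi> \<circ> \<alpha>) x"
    using H'.S_coalg_char(1)[OF lin_pull[OF lp] lin_pull[OF lq]] by blast+
  note d' = H'.graded_subcoalgebraD[OF c'(1)]
  show ?thesis
  proof (rule H.S_coalg_char(2)[OF lp lq])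
    show "graded_subcoalgebra H (\<alpha> ` ?S')"
    proof (rule H.graded_subcoalgebraI)
      show "H.vs.subspace (\<alpha> ` ?S')" by (rule la.subspace_image[OF d'(1)])
      show "proj H n y \<in> \<alpha> ` ?S'" if "y \<in> \<alpha> ` ?S'" for y n
        using that d'(2) by (auto simp: proj_alpha)
      show "\<alpha> ` ?S' \<subseteq> H.copset (\<alpha> ` ?S')"
      proof
        fix y assume "y \<in> \<alpha> ` ?S'"
        then obtain x where x: "x \<in> ?S'" "y = \<alpha> x" by blast
        then obtain ts where ts: "tens2_eq H' (cop H' x) ts" "set ts \<subseteq> ?S' \<times> ?S'"
          using d'(3) unfolding H'.copset_def by blast
        have "tens2_eq H (cop H (\<alpha> x)) (map (\<lambda>(a,b). (\<alpha> a, \<alpha> b)) ts)"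
          by (rule H.tens2_trans[OF H.tens2_sym[OF acop] tens2_push[OF ts(1)]])
        moreover have "set (map (\<lambda>(a,b). (\<alpha> a, \<alpha> b)) ts) \<subseteq> \<alpha> ` ?S' \<times> \<alpha> ` ?S'"
          using ts(2) by auto
        ultimately show "y \<in> H.copset (\<alpha> ` ?S')" unfolding H.copset_def using x by blast
      qed
    qed
    show "\<forall>x\<in>\<alpha> ` ?S'. \<phi> x = \<psi> x" using c'(2) by auto
  qed
qed

lemma gens_gdual: "lin_fun H \<phi> \<Longrightarrow> lin_fun H \<psi> \<Longrightarrow>
  {(\<lambda>x. comp_n H \<phi> n x - comp_n H \<psi> n x) | n. True} \<subseteq> gdual H"
  using H.gen_in_gdual by blast

lemma dual_ideal_conj:
  assumes "dual_ideal G J"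
  shows "J \<subseteq> gdual G \<and> (\<lambda>_. 0) \<in> J \<and> (\<forall>f\<in>J. \<forall>g\<in>J. (\<lambda>x. f x + g x) \<in> J) \<and>
     (\<forall>c. \<forall>f\<in>J. (\<lambda>x. c * f x) \<in> J) \<and>
     (\<forall>f\<in>J. \<forall>g\<in>gdual G. conv G f g \<in> J \<and> conv G g f \<in> J)"
  using assms unfolding dual_ideal_def .

lemma dual_idealD:
  assumes "dual_ideal G J"
  shows "J \<subseteq> gdual G" "(\<lambda>_. 0) \<in> J" "\<And>f g. f \<in> J \<Longrightarrow> g \<in> J \<Longrightarrow> (\<lambda>x. f x + g x) \<in> J"
    "\<And>f c. f \<in> J \<Longrightarrow> (\<lambda>x. c * f x) \<in> J"
    "\<And>f g. f \<in> J \<Longrightarrow> g \<in> gdual G \<Longrightarrow> conv G f g \<in> J"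
    "\<And>f g. f \<in> J \<Longrightarrow> g \<in> gdual G \<Longrightarrow> conv G g f \<in> J"
proof -
  note A = dual_ideal_conj[OF assms]
  show "J \<subseteq> gdual G" using A by (rule conjunct1)
  show "(\<lambda>_. 0) \<in> J" using A by (elim conjE)
  show "(\<lambda>x. f x + g x) \<in> J" if "f \<in> J" "g \<in> J" for f g
    using A[THEN conjunct2, THEN conjunct2, THEN conjunct1] that by (elim ballE) auto
  show "(\<lambda>x. c * f x) \<in> J" if "f \<in> J" for f c
    using A[THEN conjunct2, THEN conjunct2, THEN conjunct2, THEN conjunct1] that by auto
  show "conv G f g \<in> J" if "f \<in> J" "g \<in> gdual G" for f g
    using A[THEN conjunct2, THEN conjunct2, THEN conjunct2, THEN conjunct2] that by auto
  show "conv G g f \<in> J" if "f \<in> J" "g \<in> gdual G" for f g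
    using A[THEN conjunct2, THEN conjunct2, THEN conjunct2, THEN conjunct2] that by auto
qed

lemma dual_idealI:
  assumes "J \<subseteq> gdual G" "(\<lambda>_. 0) \<in> J" "\<And>f g. f \<in> J \<Longrightarrow> g \<in> J \<Longrightarrow> (\<lambda>x. f x + g x) \<in> J"
    "\<And>f c. f \<in> J \<Longrightarrow> (\<lambda>x. c * f x) \<in> J"
    "\<And>f g. f \<in> J \<Longrightarrow> g \<in> gdual G \<Longrightarrow> conv G f g \<in> J"
    "\<And>f g. f \<in> J \<Longrightarrow> g \<in> gdual G \<Longrightarrow> conv G g f \<in> J"
  shows "dual_ideal G J"
  unfolding dual_ideal_def
  by (intro conjI ballI allI assms(1,2)) (simp_all add: assms(3-6))

lemma dual_map_0: "dual_map \<alpha> (\<lambda>_. 0) = (\<lambda>_. 0)" by (simp add: dual_map_def o_def)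
lemma dual_map_add: "dual_map \<alpha> (\<lambda>x. f x + g x) = (\<lambda>x. dual_map \<alpha> f x + dual_map \<alpha> g x)"
  by (simp add: dual_map_def o_def)
lemma dual_map_sc: "dual_map \<alpha> (\<lambda>x. c * f x) = (\<lambda>x. c * dual_map \<alpha> f x)"
  by (simp add: dual_map_def o_def)

lemma gdual_lin: "f \<in> gdual G \<Longrightarrow> lin_fun G f" unfolding gdual_def by blast

lemma img_sub:
  assumes lp: "lin_fun H \<phi>" and lq: "lin_fun H \<psi>"
  shows "dual_map \<alpha> ` I_ideal H \<phi> \<psi> \<subseteq> I_ideal H' (\<phi> \<circ> \<alpha>) (\<psi> \<circ> \<alpha>)"
proof -
  let ?I' = "I_ideal H' (\<phi> \<circ> \<alpha>) (\<psi> \<circ> \<alpha>)"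
  let ?G = "{(\<lambda>x. comp_n H \<phi> n x - comp_n H \<psi> n x) | n. True}"
  have I': "dual_ideal H' ?I'" by (rule H'.I_ideal_is[OF lin_pull[OF lp] lin_pull[OF lq]])
  define K where "K = {f \<in> gdual H. dual_map \<alpha> f \<in> ?I'}"
  have K: "f \<in> K \<longleftrightarrow> f \<in> gdual H \<and> dual_map \<alpha> f \<in> ?I'" for f unfolding K_def by simp
  have gd: "dual_ideal H (gdual H)" by (rule H.gdual_ideal)
  have "dual_ideal H K"
  proof (rule dual_idealI)
    show "K \<subseteq> gdual H" using K by blast
    show "(\<lambda>_. 0) \<in> K" unfolding K dual_map_0 using dual_idealD(2)[OF gd] dual_idealD(2)[OF I'] by (rule conjI)
    show "(\<lambda>x. f x + g x) \<in> K" if "f \<in> K" "g \<in> K" for f g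
    proof -
      have a: "f \<in> gdual H" "g \<in> gdual H" "dual_map \<alpha> f \<in> ?I'" "dual_map \<alpha> g \<in> ?I'"
        using that unfolding K by simp_all
      show ?thesis unfolding K dual_map_add
        using dual_idealD(3)[OF gd a(1,2)] dual_idealD(3)[OF I' a(3,4)] by (rule conjI)
    qed
    show "(\<lambda>x. c * f x) \<in> K" if "f \<in> K" for f c
    proof -
      have a: "f \<in> gdual H" "dual_map \<alpha> f \<in> ?I'"
        using that unfolding K by simp_all
      show ?thesis unfolding K dual_map_sc
        using dual_idealD(4)[OF gd a(1)] dual_idealD(4)[OF I' a(2)] by (rule conjI)
    qed
    show "conv H f g \<in> K" if "f \<in> K" "g \<in> gdual H" for f g
    proof -
      have f: "f \<in> gdual H" "dual_map \<alpha> f \<in> ?I'" using that(1) unfolding K by simp_all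
      have lf: "lin_fun H f" "lin_fun H g" using f(1) that(2) by (simp_all add: gdual_lin)
      have "dual_map \<alpha> g \<in> gdual H'" by (rule dual_gdual[OF that(2)])
      then have "conv H' (dual_map \<alpha> f) (dual_map \<alpha> g) \<in> ?I'" by (rule dual_idealD(5)[OF I' f(2)])
      moreover have "conv H f g \<in> gdual H" by (rule H.conv_gdual[OF f(1) that(2)])
      ultimately show ?thesis unfolding K dual_conv[OF lf] by (rule conjI[rotated])
    qed
    show "conv H g f \<in> K" if "f \<in> K" "g \<in> gdual H" for f g
    proof -
      have f: "f \<in> gdual H" "dual_map \<alpha> f \<in> ?I'" using that(1) unfolding K by simp_all
      have lf: "lin_fun H g" "lin_fun H f" using f(1) that(2) by (simp_all add: gdual_lin)
      have "dual_map \<alpha> g \<in> gdual H'" by (rule dual_gdual[OF that(2)])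
      then have "conv H' (dual_map \<alpha> g) (dual_map \<alpha> f) \<in> ?I'" by (rule dual_idealD(6)[OF I' f(2)])
      moreover have "conv H g f \<in> gdual H" by (rule H.conv_gdual[OF that(2) f(1)])
      ultimately show ?thesis unfolding K dual_conv[OF lf] by (rule conjI[rotated])
    qed
  qed
  moreover have "?G \<subseteq> K"
  proof
    fix g assume g: "g \<in> ?G"
    then have "dual_map \<alpha> g \<in> dual_map \<alpha> ` ?G" by (rule imageI)
    then have "dual_map \<alpha> g \<in> {(\<lambda>x. comp_n H' (\<phi> \<circ> \<alpha>) n x - comp_n H' (\<psi> \<circ> \<alpha>) n x) | n. True}"
      unfolding dual_gens .
    then have "dual_map \<alpha> g \<in> ?I'" unfolding I_ideal_def using H'.gen_sub by (rule subsetD[rotated])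
    moreover have "g \<in> gdual H" using g gens_gdual[OF lp lq] by (rule subsetD[rotated])
    ultimately show "g \<in> K" unfolding K by (rule conjI[rotated])
  qed
  ultimately have "I_ideal H \<phi> \<psi> \<subseteq> K" unfolding I_ideal_def by (rule H.gen_least)
  then show ?thesis using K by blast
qed

lemma part_b:
  assumes lp: "lin_fun H \<phi>" and lq: "lin_fun H \<psi>"
  shows "I_ideal H' (\<phi> \<circ> \<alpha>) (\<psi> \<circ> \<alpha>) = gen_ideal H' (dual_map \<alpha> ` I_ideal H \<phi> \<psi>)"
proof
  let ?G = "{(\<lambda>x. comp_n H \<phi> n x - comp_n H \<psi> n x) | n. True}"
  have "?G \<subseteq> I_ideal H \<phi> \<psi>" unfolding I_ideal_def by (rule H.gen_sub)
  then have "dual_map \<alpha> ` ?G \<subseteq> dual_map \<alpha> ` I_ideal H \<phi> \<psi>" by (rule image_mono)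
  then show "I_ideal H' (\<phi> \<circ> \<alpha>) (\<psi> \<circ> \<alpha>) \<subseteq> gen_ideal H' (dual_map \<alpha> ` I_ideal H \<phi> \<psi>)"
    unfolding I_ideal_def[of H'] dual_gens[symmetric] by (rule H'.gen_mono)
  show "gen_ideal H' (dual_map \<alpha> ` I_ideal H \<phi> \<psi>) \<subseteq> I_ideal H' (\<phi> \<circ> \<alpha>) (\<psi> \<circ> \<alpha>)"
    by (rule H'.gen_least[OF H'.I_ideal_is[OF lin_pull[OF lp] lin_pull[OF lq]] img_sub[OF lp lq]])
qed

end

context morph
begin

lemma left_inv:
  assumes "inj \<alpha>"
  shows "\<exists>L. Vector_Spaces.linear (scl H) (scl H') L \<and> (\<forall>v. L (\<alpha> v) = v)"
proof -
  interpret vector_space_pair "scl H'" "scl H" by unfold_locales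
  have "inj_on \<alpha> UNIV" using assms by simp
  from linear_exists_left_inverse_on[OF alin H'.vs.subspace_UNIV this] show ?thesis by blast
qed

lemma ext_any:
  assumes "inj \<alpha>" "lin_fun H' g"
  shows "\<exists>G. lin_fun H G \<and> (\<forall>y. G (\<alpha> y) = g y)"
proof -
  obtain L where L: "Vector_Spaces.linear (scl H) (scl H') L" "\<forall>v. L (\<alpha> v) = v"
    using left_inv[OF assms(1)] by blast
  have "lin_fun H (g \<circ> L)"
    using assms(2) L(1) unfolding lin_fun_def by (rule Vector_Spaces.linear_compose[rotated])
  then show ?thesis using L(2) by auto
qed

lemma dual_surj:
  assumes "inj \<alpha>" "f \<in> gdual H'"
  shows "\<exists>F\<in>gdual H. dual_map \<alpha> F = f"
proof -
  obtain L where L: "Vector_Spaces.linear (scl H) (scl H') L" "\<forall>v. L (\<alpha> v) = v"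
    using left_inv[OF assms(1)] by blast
  interpret lL: Vector_Spaces.linear "scl H" "scl H'" L by (rule L(1))
  define N where "N = {n. \<exists>x\<in>grd H' n. f x \<noteq> 0}"
  have lf: "lin_fun H' f" and fN: "finite N" using assms(2) unfolding gdual_def N_def by auto
  define F where "F y = (\<Sum>n\<in>N. f (L (proj H n y)))" for y
  have linF: "lin_fun H F"
  proof (rule H.lin_funI)
    fix x y show "F (x + y) = F x + F y"
      unfolding F_def by (simp add: H.proj_add lL.add H'.lin_funD(1)[OF lf] sum.distrib)
  next
    fix c x show "F (scl H c x) = c * F x"
      unfolding F_def by (simp add: H.proj_scale lL.scale H'.lin_funD(2)[OF lf] sum_distrib_left)
  qed
  have supp: "{m. \<exists>y\<in>grd H m. F y \<noteq> 0} \<subseteq> N"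
  proof
    fix m assume "m \<in> {m. \<exists>y\<in>grd H m. F y \<noteq> 0}"
    then obtain y where y: "y \<in> grd H m" "F y \<noteq> 0" by blast
    show "m \<in> N"
    proof (rule ccontr)
      assume mN: "m \<notin> N"
      have "F y = (\<Sum>n\<in>N. f (L 0))"
        unfolding F_def using mN by (intro sum.cong) (auto simp: H.proj_hom[OF y(1)])
      also have "\<dots> = 0" using H'.lin_funD(3)[OF lf] by simp
      finally show False using y(2) by simp
    qed
  qed
  have FG: "F \<in> gdual H" unfolding gdual_def using linF supp fN by (auto intro: finite_subset)
  have "dual_map \<alpha> F = f"
  proof
    fix x
    have "dual_map \<alpha> F x = (\<Sum>n\<in>N. f (proj H' n x))"
      unfolding dual_map_def F_def o_def by (simp add: proj_alpha L(2))
    also have "\<dots> = (\<Sum>n\<in>N \<union> {m. proj H' m x \<noteq> 0}. f (proj H' n x))"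
    proof (rule sum.mono_neutral_left)
      show "finite (N \<union> {m. proj H' m x \<noteq> 0})" using fN H'.proj_fin by simp
      show "N \<subseteq> N \<union> {m. proj H' m x \<noteq> 0}" by blast
      show "\<forall>i\<in>N \<union> {m. proj H' m x \<noteq> 0} - N. f (proj H' i x) = 0"
        using H'.proj_grd unfolding N_def by blast
    qed
    also have "\<dots> = f x"
      using H'.lin_fun_proj_sum[OF lf, of "N \<union> {m. proj H' m x \<noteq> 0}" x] fN H'.proj_fin by simp
    finally show "dual_map \<alpha> F x = f x" .
  qed
  then show ?thesis using FG by blast
qed

end

context morph
begin

lemma part_inj_I:
  assumes inj: "inj \<alpha>" and lp: "lin_fun H \<phi>" and lq: "lin_fun H \<psi>"
  shows "I_ideal H' (\<phi> \<circ> \<alpha>) (\<psi> \<circ> \<alpha>) = dual_map \<alpha> ` I_ideal H \<phi> \<psi>"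
proof
  show "dual_map \<alpha> ` I_ideal H \<phi> \<psi> \<subseteq> I_ideal H' (\<phi> \<circ> \<alpha>) (\<psi> \<circ> \<alpha>)" by (rule img_sub[OF lp lq])
  let ?I = "I_ideal H \<phi> \<psi>"
  let ?G = "{(\<lambda>x. comp_n H \<phi> n x - comp_n H \<psi> n x) | n. True}"
  have I: "dual_ideal H ?I" by (rule H.I_ideal_is[OF lp lq])
  have "dual_ideal H' (dual_map \<alpha> ` ?I)"
  proof (rule dual_idealI)
    show "dual_map \<alpha> ` ?I \<subseteq> gdual H'"
    proof
      fix h assume "h \<in> dual_map \<alpha> ` ?I"
      then obtain h0 where h0: "h = dual_map \<alpha> h0" "h0 \<in> ?I" by (rule imageE)
      show "h \<in> gdual H'" unfolding h0(1) by (rule dual_gdual[OF subsetD[OF dual_idealD(1)[OF I] h0(2)]])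
    qed
    show "(\<lambda>_. 0) \<in> dual_map \<alpha> ` ?I"
      by (rule image_eqI[where f="dual_map \<alpha>", OF dual_map_0[symmetric] dual_idealD(2)[OF I]])
    show "(\<lambda>x. f x + g x) \<in> dual_map \<alpha> ` ?I" if "f \<in> dual_map \<alpha> ` ?I" "g \<in> dual_map \<alpha> ` ?I" for f g
    proof -
      from that(1) obtain f0 where f0: "f = dual_map \<alpha> f0" "f0 \<in> ?I" by (rule imageE)
      from that(2) obtain g0 where g0: "g = dual_map \<alpha> g0" "g0 \<in> ?I" by (rule imageE)
      have e: "(\<lambda>x. f x + g x) = dual_map \<alpha> (\<lambda>x. f0 x + g0 x)" unfolding f0(1) g0(1) dual_map_add ..
      show ?thesis by (rule image_eqI[where f="dual_map \<alpha>", OF e dual_idealD(3)[OF I f0(2) g0(2)]])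
    qed
    show "(\<lambda>x. c * f x) \<in> dual_map \<alpha> ` ?I" if "f \<in> dual_map \<alpha> ` ?I" for f c
    proof -
      from that(1) obtain f0 where f0: "f = dual_map \<alpha> f0" "f0 \<in> ?I" by (rule imageE)
      have e: "(\<lambda>x. c * f x) = dual_map \<alpha> (\<lambda>x. c * f0 x)" unfolding f0(1) dual_map_sc ..
      show ?thesis by (rule image_eqI[where f="dual_map \<alpha>", OF e dual_idealD(4)[OF I f0(2)]])
    qed
    show "conv H' f g \<in> dual_map \<alpha> ` ?I" if "f \<in> dual_map \<alpha> ` ?I" "g \<in> gdual H'" for f g
    proof -
      from that(1) obtain f0 where f0: "f = dual_map \<alpha> f0" "f0 \<in> ?I" by (rule imageE)
      from dual_surj[OF inj that(2)] obtain g0 where g0: "g0 \<in> gdual H" "dual_map \<alpha> g0 = g" by (rule bexE)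
      have lf: "lin_fun H f0" "lin_fun H g0"
        using gdual_lin[OF subsetD[OF dual_idealD(1)[OF I] f0(2)]] gdual_lin[OF g0(1)] .
      have e: "conv H' f g = dual_map \<alpha> (conv H f0 g0)" unfolding f0(1) g0(2)[symmetric] dual_conv[OF lf] ..
      show ?thesis by (rule image_eqI[where f="dual_map \<alpha>", OF e dual_idealD(5)[OF I f0(2) g0(1)]])
    qed
    show "conv H' g f \<in> dual_map \<alpha> ` ?I" if "f \<in> dual_map \<alpha> ` ?I" "g \<in> gdual H'" for f g
    proof -
      from that(1) obtain f0 where f0: "f = dual_map \<alpha> f0" "f0 \<in> ?I" by (rule imageE)
      from dual_surj[OF inj that(2)] obtain g0 where g0: "g0 \<in> gdual H" "dual_map \<alpha> g0 = g" by (rule bexE)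
      have lf: "lin_fun H g0" "lin_fun H f0"
        using gdual_lin[OF g0(1)] gdual_lin[OF subsetD[OF dual_idealD(1)[OF I] f0(2)]] .
      have e: "conv H' g f = dual_map \<alpha> (conv H g0 f0)" unfolding f0(1) g0(2)[symmetric] dual_conv[OF lf] ..
      show ?thesis by (rule image_eqI[where f="dual_map \<alpha>", OF e dual_idealD(6)[OF I f0(2) g0(1)]])
    qed
  qed
  moreover have "dual_map \<alpha> ` ?G \<subseteq> dual_map \<alpha> ` ?I"
    by (rule image_mono) (unfold I_ideal_def, rule H.gen_sub)
  ultimately show "I_ideal H' (\<phi> \<circ> \<alpha>) (\<psi> \<circ> \<alpha>) \<subseteq> dual_map \<alpha> ` ?I"
    unfolding I_ideal_def[of H'] dual_gens[symmetric] by (rule H'.gen_least)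
qed

end

context morph
begin

lemma ext_vanish:
  assumes inj: "inj \<alpha>" and sS: "H.vs.subspace S" and lf: "lin_fun H' f"
    and van: "\<And>y. \<alpha> y \<in> S \<Longrightarrow> f y = 0"
  shows "\<exists>F. lin_fun H F \<and> (\<forall>y. F (\<alpha> y) = f y) \<and> (\<forall>s\<in>S. F s = 0)"
proof -
  define C where "C = \<alpha> -` S"
  have sC: "H'.vs.subspace C" unfolding C_def by (rule la.subspace_vimage[OF sS])
  obtain p where p: "Vector_Spaces.linear (scl H') (scl H') p" "range p \<subseteq> C" "\<forall>u\<in>C. p u = u"
    using proj_onto_exists[OF H'.vs sC] by blast
  obtain q where q: "Vector_Spaces.linear (scl H) (scl H) q" "range q \<subseteq> S" "\<forall>u\<in>S. q u = u"
    using proj_onto_exists[OF H.vs sS] by blast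
  interpret lp: Vector_Spaces.linear "scl H'" "scl H'" p by (rule p(1))
  interpret lq: Vector_Spaces.linear "scl H" "scl H" q by (rule q(1))
  have pC: "p y \<in> C" for y using p(2) by blast
  have pp: "p (p y) = p y" for y using p(3) pC by blast
  have qS: "q z \<in> S" for z using q(2) by blast
  define T where "T y = \<alpha> y - q (\<alpha> y)" for y
  have linT: "Vector_Spaces.linear (scl H') (scl H) T"
    unfolding Vector_Spaces.linear_iff
  proof (intro conjI allI)
    show "vector_space (scl H')" by (rule H'.vs)
    show "vector_space (scl H)" by (rule H.vs)
    show "T (x + y) = T x + T y" for x y unfolding T_def by (simp add: la.add lq.add)
    show "T (scl H' c x) = scl H c (T x)" for c x
      unfolding T_def by (simp add: la.scale lq.scale H.vs.scale_right_diff_distrib)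
  qed
  interpret lT: Vector_Spaces.linear "scl H'" "scl H" T by (rule linT)
  define V where "V = range (\<lambda>y. y - p y)"
  have sV: "H'.vs.subspace V"
    unfolding H'.vs.subspace_def V_def
  proof (intro conjI ballI allI)
    show "0 \<in> range (\<lambda>y. y - p y)" by (rule range_eqI[of _ _ 0]) simp
    fix u w assume "u \<in> range (\<lambda>y. y - p y)" "w \<in> range (\<lambda>y. y - p y)"
    then obtain y z where "u = y - p y" "w = z - p z" by blast
    then have "u + w = (y + z) - p (y + z)" by (simp add: lp.add algebra_simps)
    then show "u + w \<in> range (\<lambda>y. y - p y)" by (rule range_eqI)
  next
    fix c u assume "u \<in> range (\<lambda>y. y - p y)"
    then obtain y where "u = y - p y" by blast
    then have "scl H' c u = scl H' c y - p (scl H' c y)" by (simp add: lp.scale H'.vs.scale_right_diff_distrib)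
    then show "scl H' c u \<in> range (\<lambda>y. y - p y)" by (rule range_eqI)
  qed
  have Tker: "T v = 0 \<Longrightarrow> v \<in> C" for v
  proof -
    assume "T v = 0"
    then have "\<alpha> v = q (\<alpha> v)" unfolding T_def by simp
    then show "v \<in> C" unfolding C_def using qS by (metis vimageI)
  qed
  have Vp: "v \<in> V \<Longrightarrow> p v = 0" for v
    unfolding V_def using pp by (auto simp: lp.diff)
  have injV: "inj_on T V"
  proof (rule inj_onI)
    fix u w assume u: "u \<in> V" and w: "w \<in> V" and e: "T u = T w"
    have uw: "u - w \<in> V" using u w sV H'.vs.subspace_diff by blast
    have "T (u - w) = 0" using e by (simp add: lT.diff)
    then have "u - w \<in> C" by (rule Tker)
    then have "p (u - w) = u - w" using p(3) by blast
    moreover have "p (u - w) = 0" using Vp[OF uw] .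
    ultimately show "u = w" by simp
  qed
  interpret vsp: vector_space_pair "scl H'" "scl H" by unfold_locales
  obtain Lt where Lt: "Vector_Spaces.linear (scl H) (scl H') Lt" "\<forall>v\<in>V. Lt (T v) = v"
    using vsp.linear_exists_left_inverse_on[OF linT sV injV] by blast
  interpret lLt: Vector_Spaces.linear "scl H" "scl H'" Lt by (rule Lt(1))
  define F where "F z = f (Lt (z - q z))" for z
  have linF: "lin_fun H F"
  proof (rule H.lin_funI)
    fix x y
    have "x + y - q (x + y) = (x - q x) + (y - q y)" by (simp add: lq.add algebra_simps)
    then show "F (x + y) = F x + F y"
      unfolding F_def by (simp only: lLt.add H'.lin_funD(1)[OF lf])
  next
    fix c x show "F (scl H c x) = c * F x"
      unfolding F_def by (simp add: lq.scale H.vs.scale_right_diff_distrib[symmetric] lLt.scale H'.lin_funD(2)[OF lf])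
  qed
  have Fa: "F (\<alpha> y) = f y" for y
  proof -
    have "\<alpha> (p y) \<in> S" using pC[of y] unfolding C_def by simp
    then have Tp: "T (p y) = 0" unfolding T_def using q(3) by simp
    have "T y = T (y - p y)" by (simp add: lT.diff Tp)
    moreover have "y - p y \<in> V" unfolding V_def by simp
    ultimately have "Lt (T y) = y - p y" using Lt(2) by simp
    moreover have "f (p y) = 0" using van pC[of y] unfolding C_def by simp
    ultimately show ?thesis unfolding F_def T_def[symmetric] by (simp add: H'.lin_funD(4)[OF lf])
  qed
  have FS: "F s = 0" if "s \<in> S" for s
    unfolding F_def using that q(3) H'.lin_funD(3)[OF lf] by simp
  show ?thesis using linF Fa FS by blast
qed

end

context morph
begin

lemma vimage_copset:
  assumes inj: "inj \<alpha>" and gS: "graded_subcoalgebra H S"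
  shows "\<alpha> -` S \<subseteq> H'.copset (\<alpha> -` S)"
proof
  fix x assume x: "x \<in> \<alpha> -` S"
  have sS: "H.vs.subspace S" by (rule H.graded_subcoalgebraD(1)[OF gS])
  have "\<alpha> x \<in> H.copset S" using x H.graded_subcoalgebraD(3)[OF gS] by blast
  then obtain ts where ts: "tens2_eq H (cop H (\<alpha> x)) ts" "set ts \<subseteq> S \<times> S"
    unfolding H.copset_def by blast
  have key: "T2 f g (cop H' x) = 0 \<and> T2 g f (cop H' x) = 0"
    if lf: "lin_fun H' f" and lg: "lin_fun H' g" and van: "\<forall>y\<in>\<alpha> -` S. f y = 0" for f g
  proof -
    obtain F where F: "lin_fun H F" "\<forall>y. F (\<alpha> y) = f y" "\<forall>s\<in>S. F s = 0"
      using ext_vanish[OF inj sS lf] van by blast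
    obtain G where G: "lin_fun H G" "\<forall>y. G (\<alpha> y) = g y"
      using ext_any[OF inj lg] by blast
    have fe: "f = F \<circ> \<alpha>" and ge: "g = G \<circ> \<alpha>" using F(2) G(2) by auto
    have Fa: "F a = 0" if "(a, b) \<in> set ts" for a b using that ts(2) F(3) by blast
    have Fb: "F b = 0" if "(a, b) \<in> set ts" for a b using that ts(2) F(3) by blast
    have "T2 f g (cop H' x) = T2 F G ts"
      unfolding fe ge T2_acop[OF F(1) G(1), symmetric] using ts(1) F(1) G(1) unfolding tens2_eq_T2 by blast
    also have "\<dots> = 0" by (rule T2_zero) (use Fa in blast)
    finally have 1: "T2 f g (cop H' x) = 0" .
    have "T2 g f (cop H' x) = T2 G F ts"
      unfolding fe ge T2_acop[OF G(1) F(1), symmetric] using ts(1) F(1) G(1) unfolding tens2_eq_T2 by blast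
    also have "\<dots> = 0" by (rule T2_zero) (use Fb in blast)
    finally show ?thesis using 1 by simp
  qed
  have sC: "H'.vs.subspace (\<alpha> -` S)" by (rule la.subspace_vimage[OF sS])
  obtain p where p: "Vector_Spaces.linear (scl H') (scl H') p" "range p \<subseteq> \<alpha> -` S" "\<forall>u\<in>\<alpha> -` S. p u = u"
    using proj_onto_exists[OF H'.vs sC] by blast
  let ?ts = "map (\<lambda>(a,b). (p a, p b)) (cop H' x)"
  have "tens2_eq H' (cop H' x) ?ts"
    unfolding tens2_eq_T2
  proof (intro allI impI)
    fix f g assume lf: "lin_fun H' f" and lg: "lin_fun H' g"
    have lfp: "lin_fun H' (f \<circ> p)" and lgp: "lin_fun H' (g \<circ> p)"
      using H'.lin_fun_comp[OF p(1)] lf lg by blast+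
    have "T2 (\<lambda>a. f a - (f \<circ> p) a) g (cop H' x) = 0"
      using key[OF H'.lin_fun_diff[OF lf lfp] lg] p(3) by auto
    moreover have "T2 (f \<circ> p) (\<lambda>b. g b - (g \<circ> p) b) (cop H' x) = 0"
      using key[OF H'.lin_fun_diff[OF lg lgp] lfp] p(3) by auto
    ultimately have "T2 f g (cop H' x) - T2 (f \<circ> p) (g \<circ> p) (cop H' x) = 0"
      unfolding T2_diff by simp
    then show "T2 f g (cop H' x) = T2 f g ?ts" unfolding T2_map by simp
  qed
  moreover have "set ?ts \<subseteq> (\<alpha> -` S) \<times> (\<alpha> -` S)" using p(2) by auto
  ultimately show "x \<in> H'.copset (\<alpha> -` S)" unfolding H'.copset_def by blast
qed

lemma part_inj_S:
  assumes inj: "inj \<alpha>" and lp: "lin_fun H \<phi>" and lq: "lin_fun H \<psi>"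
  shows "S_coalg H' (\<phi> \<circ> \<alpha>) (\<psi> \<circ> \<alpha>) = \<alpha> -` S_coalg H \<phi> \<psi>"
proof
  show "S_coalg H' (\<phi> \<circ> \<alpha>) (\<psi> \<circ> \<alpha>) \<subseteq> \<alpha> -` S_coalg H \<phi> \<psi>"
    using part_a[OF lp lq] by blast
  let ?S = "S_coalg H \<phi> \<psi>"
  have cS: "graded_subcoalgebra H ?S" "\<forall>x\<in>?S. \<phi> x = \<psi> x"
    using H.S_coalg_char(1)[OF lp lq] by blast+
  show "\<alpha> -` ?S \<subseteq> S_coalg H' (\<phi> \<circ> \<alpha>) (\<psi> \<circ> \<alpha>)"
  proof (rule H'.S_coalg_char(2)[OF lin_pull[OF lp] lin_pull[OF lq]])
    show "graded_subcoalgebra H' (\<alpha> -` ?S)"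
    proof (rule H'.graded_subcoalgebraI)
      show "H'.vs.subspace (\<alpha> -` ?S)" by (rule la.subspace_vimage[OF H.graded_subcoalgebraD(1)[OF cS(1)]])
      show "proj H' n x \<in> \<alpha> -` ?S" if "x \<in> \<alpha> -` ?S" for x n
        using that H.graded_subcoalgebraD(2)[OF cS(1)] by (simp add: proj_alpha[symmetric])
      show "\<alpha> -` ?S \<subseteq> H'.copset (\<alpha> -` ?S)" by (rule vimage_copset[OF inj cS(1)])
    qed
    show "\<forall>x\<in>\<alpha> -` ?S. (\<phi> \<circ> \<alpha>) x = (\<psi> \<circ> \<alpha>) x" using cS(2) by simp
  qed
qed

end

theorem proposition5p6:
  fixes H' :: "('k::field, 'a::ab_group_add) ghopf"
    and H :: "('k, 'b::ab_group_add) ghopf"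
    and \<alpha> :: "'a \<Rightarrow> 'b"
    and \<phi> \<psi> :: "'b \<Rightarrow> 'k"
  assumes "graded_connected_hopf H'" and "graded_connected_hopf H"
    and "hopf_morphism H' H \<alpha>"
    and "character H \<phi>" and "character H \<psi>"
  shows "\<alpha> ` S_coalg H' (\<phi> \<circ> \<alpha>) (\<psi> \<circ> \<alpha>) \<subseteq> S_coalg H \<phi> \<psi>
     \<and> I_ideal H' (\<phi> \<circ> \<alpha>) (\<psi> \<circ> \<alpha>) = gen_ideal H' (dual_map \<alpha> ` I_ideal H \<phi> \<psi>)
     \<and> (inj \<alpha> \<longrightarrow> S_coalg H' (\<phi> \<circ> \<alpha>) (\<psi> \<circ> \<alpha>) = \<alpha> -` S_coalg H \<phi> \<psi>
                 \<and> I_ideal H' (\<phi> \<circ> \<alpha>) (\<psi> \<circ> \<alpha>) = dual_map \<alpha> ` I_ideal H \<phi> \<psi>)"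
proof -
  interpret morph H' H \<alpha>
    by (intro morph.intro gch.intro morph_axioms.intro) (rule assms)+
  have lp: "lin_fun H \<phi>" using assms(4) unfolding character_def by (elim conjE)
  have lq: "lin_fun H \<psi>" using assms(5) unfolding character_def by (elim conjE)
  show ?thesis
    using part_a[OF lp lq] part_b[OF lp lq] part_inj_S[OF _ lp lq] part_inj_I[OF _ lp lq] by blast
qed

end
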